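(* Suppose $s_0,s_1,s_2,s_3\in\sum\mathbb{R}(x,y)^2$ satisfy $s_0\,xy=s_1+s_2\,x+s_3\,y$. Then $s_0=s_1=s_2=s_3=0$.
   Context: $\mathbb{R}(x,y)$ is the field of rational functions in two real variables and $\sum\mathbb{R}(x,y)^2$ is the set of finite sums of squares of its elements. *)

theory Defs
  imports "HOL-Computational_Algebra.Polynomial" "HOL-Computational_Algebra.Fraction_Field"
begin

text \<open>The field R(x,y) of real rational functions in two variables, realised as
  the fraction field of R[x][y] (polynomials in y with coefficients in R[x]).\<close>
type_synonym rat_fun2 = "real poly poly fract"

definition varX :: rat_fun2 where
  "varX = Fract [:[:0, 1:]:] 1"

definition varY :: rat_fun2 where
  "varY = Fract [:0, 1:] 1"

definition sums_of_squares :: "'a::comm_ring_1 set" where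
  "sums_of_squares = {s. \<exists>xs. s = sum_list (map (\<lambda>a. a ^ 2) xs)}"

end

theory Submission
  imports Defs
begin


lemma sos_zero: "0 \<in> sums_of_squares"
  unfolding sums_of_squares_def by (rule CollectI, rule exI[of _ "[]"]) simp
lemma sos_sq: "a^2 \<in> sums_of_squares"
  unfolding sums_of_squares_def by (rule CollectI, rule exI[of _ "[a]"]) simp
lemma sos_add: "a \<in> sums_of_squares \<Longrightarrow> b \<in> sums_of_squares \<Longrightarrow> a + b \<in> sums_of_squares"
proof -
  assume "a \<in> sums_of_squares" "b \<in> sums_of_squares"
  then obtain xs ys where "a = sum_list (map (\<lambda>a. a^2) xs)" "b = sum_list (map (\<lambda>a. a^2) ys)"
    unfolding sums_of_squares_def by auto
  then have "a + b = sum_list (map (\<lambda>a. a^2) (xs @ ys))" by simp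
  then show ?thesis unfolding sums_of_squares_def by blast
qed

definition FR :: "'a::comm_ring_1 itself \<Rightarrow> bool" where
  "FR T = (\<forall>a::'a \<in> sums_of_squares. \<forall>b \<in> sums_of_squares. a + b = 0 \<longrightarrow> a = 0)"

lemma poly_sos:
  assumes fr: "FR TYPE('a::idom)"
  assumes "(p :: 'a poly) \<in> sums_of_squares"
  shows "p = 0 \<or> (even (degree p) \<and> lead_coeff p \<in> sums_of_squares)"
proof -
  obtain xs where p: "p = sum_list (map (\<lambda>a. a^2) xs)"
    using assms(2) unfolding sums_of_squares_def by auto
  show ?thesis unfolding p
  proof (induction xs)
    case Nil then show ?case by simp
  next
    case (Cons q xs)
    define r where "r = sum_list (map (\<lambda>a. a^2) xs)"
    have IH: "r = 0 \<or> (even (degree r) \<and> lead_coeff r \<in> sums_of_squares)"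
      using Cons.IH r_def by simp
    have e: "sum_list (map (\<lambda>a. a^2) (q # xs)) = q^2 + r" by (simp add: r_def)
    have "q^2 + r = 0 \<or> (even (degree (q^2+r)) \<and> lead_coeff (q^2+r) \<in> sums_of_squares)"
    proof (cases "q = 0")
      case True then show ?thesis using IH r_def by simp
    next
      case qnz: False
      have dq: "degree (q^2) = 2 * degree q" using qnz by (rule degree_power_eq)
      have lq: "lead_coeff (q^2) = (lead_coeff q)^2" by (rule lead_coeff_power)
      show ?thesis
      proof (cases "r = 0")
        case True then show ?thesis using dq lq sos_sq[of "lead_coeff q"] by simp
      next
        case rnz: False
        with IH have er: "even (degree r)" and lr: "lead_coeff r \<in> sums_of_squares" by auto
        consider "degree r < degree (q^2)" | "degree (q^2) < degree r" | "degree r = degree (q^2)" by linarith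
        then show ?thesis
        proof cases
          case 1 then show ?thesis using dq lq sos_sq degree_add_eq_left[OF 1]
            by (metis add.commute lead_coeff_add_le even_mult_iff even_numeral)
        next
          case 2 then show ?thesis using er lr degree_add_eq_right[OF 2] lead_coeff_add_le[OF 2]
            by simp
        next
          case 3
          have cn: "coeff (q^2 + r) (degree (q^2)) = (lead_coeff q)^2 + lead_coeff r"
            using 3 lq by simp
          have "(lead_coeff q)^2 + lead_coeff r \<noteq> 0"
          proof
            assume "(lead_coeff q)^2 + lead_coeff r = 0"
            then have "(lead_coeff q)^2 = 0" using fr lr sos_sq unfolding FR_def by blast
            then show False using qnz by simp
          qed
          hence nz: "coeff (q^2 + r) (degree (q^2)) \<noteq> 0" using cn by simp
          have "degree (q^2 + r) \<le> degree (q^2)"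
            using degree_add_le[of "q^2" "degree (q^2)" r] 3 by simp
          with le_degree[OF nz] have d: "degree (q^2 + r) = degree (q^2)" by simp
          show ?thesis using d cn dq sos_add[OF sos_sq lr] by simp
        qed
      qed
    qed
    then show ?case using e by simp
  qed
qed

lemma comb:
  fixes A B :: "'a::idom poly"
  assumes fr: "FR TYPE('a)"
    and pc: "\<forall>a\<in>sums_of_squares. \<forall>b\<in>sums_of_squares. a + c*b = 0 \<longrightarrow> a = 0 \<and> b = (0::'a)"
    and A: "A \<in> sums_of_squares" and B: "B \<in> sums_of_squares"
  shows "(A + smult c B = 0 \<longrightarrow> A = 0 \<and> B = 0) \<and>
         (A + smult c B \<noteq> 0 \<longrightarrow> even (degree (A + smult c B)))"
proof -
  have one: "(1::'a) \<in> sums_of_squares" using sos_sq[of "1::'a"] by simp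
  have cnz: "c \<noteq> 0" using pc sos_zero one by force
  note pA = poly_sos[OF fr A] and pB = poly_sos[OF fr B]
  show ?thesis
  proof (cases "B = 0")
    case True then show ?thesis using pA by auto
  next
    case Bnz: False
    show ?thesis
    proof (cases "A = 0")
      case True then show ?thesis using pB cnz by auto
    next
      case Anz: False
      have eA: "even (degree A)" and lA: "lead_coeff A \<in> sums_of_squares" using pA Anz by auto
      have eB: "even (degree B)" and lB: "lead_coeff B \<in> sums_of_squares" using pB Bnz by auto
      have dsB: "degree (smult c B) = degree B" using cnz by simp
      have "A + smult c B \<noteq> 0 \<and> even (degree (A + smult c B))"
      proof -
        consider "degree B < degree A" | "degree A < degree B" | "degree A = degree B" by linarith
        then show ?thesis
        proof cases
          case 1
          hence "coeff (A + smult c B) (degree A) = lead_coeff A" by (simp add: coeff_eq_0)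
          moreover have "degree (A + smult c B) = degree A" using 1 dsB degree_add_eq_left by metis
          moreover have "lead_coeff A \<noteq> 0" using Anz by simp
          ultimately show ?thesis using eA by (metis coeff_0)
        next
          case 2
          hence "coeff (A + smult c B) (degree B) = c * lead_coeff B" by (simp add: coeff_eq_0)
          moreover have "degree (A + smult c B) = degree B" using 2 dsB degree_add_eq_right by metis
          moreover have "c * lead_coeff B \<noteq> 0" using Bnz cnz by simp
          ultimately show ?thesis using eB by (metis coeff_0)
        next
          case 3
          hence cf: "coeff (A + smult c B) (degree A) = lead_coeff A + c * lead_coeff B" by simp
          have "lead_coeff A + c * lead_coeff B \<noteq> 0" using pc lA lB Anz by auto
          hence nz: "coeff (A + smult c B) (degree A) \<noteq> 0" using cf by argo
          have "degree (A + smult c B) \<le> degree A"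
            using degree_add_le[of A "degree A" "smult c B"] 3 dsB by simp
          with le_degree[OF nz] have "degree (A + smult c B) = degree A" by simp
          then show ?thesis using nz eA by (metis coeff_0)
        qed
      qed
      then show ?thesis by simp
    qed
  qed
qed

lemma FR_real: "FR TYPE(real)"
proof -
  have "\<And>a::real. a \<in> sums_of_squares \<Longrightarrow> a \<ge> 0"
    unfolding sums_of_squares_def by (auto intro!: sum_list_nonneg)
  then show ?thesis unfolding FR_def by (metis add_nonneg_eq_0_iff)
qed

lemma FR_poly:
  assumes fr: "FR TYPE('a::idom)"
  shows "FR TYPE('a poly)"
proof -
  have pc: "\<forall>a\<in>sums_of_squares. \<forall>b\<in>sums_of_squares. a + 1*b = 0 \<longrightarrow> a = 0 \<and> b = (0::'a)"
    using fr unfolding FR_def by (metis add.commute mult_1)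
  show ?thesis unfolding FR_def using comb[OF fr pc] by simp
qed

lemma onevar:
  fixes a b :: "real poly"
  assumes a: "a \<in> sums_of_squares" and b: "b \<in> sums_of_squares"
    and eq: "a + c * b = 0" and c: "c = [:0,1:] \<or> c = - [:0,1:]"
  shows "a = 0 \<and> b = 0"
proof (cases "b = 0")
  case True then show ?thesis using eq by simp
next
  case False
  have dcb: "degree (c * b) = Suc (degree b)" using c False by auto
  have "a = - (c * b)" using eq by (simp add: eq_neg_iff_add_eq_0)
  hence "a \<noteq> 0" "degree a = Suc (degree b)" using dcb False c by auto
  moreover have "even (degree b)" using poly_sos[OF FR_real b] False by auto
  moreover have "even (degree a)" using poly_sos[OF FR_real a] \<open>a \<noteq> 0\<close> by auto
  ultimately show ?thesis by simp
qed

lemma polymain: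
  fixes P0 P1 P2 P3 :: "real poly poly"
  assumes s0: "P0 \<in> sums_of_squares" and s1: "P1 \<in> sums_of_squares"
    and s2: "P2 \<in> sums_of_squares" and s3: "P3 \<in> sums_of_squares"
    and eq: "P0 * [:[:0,1:]:] * [:0,1:] = P1 + P2 * [:[:0,1:]:] + P3 * [:0,1:]"
  shows "P0 = 0 \<and> P1 = 0 \<and> P2 = 0 \<and> P3 = 0"
proof -
  define x :: "real poly" where "x = [:0,1:]"
  have pc1: "\<forall>a\<in>sums_of_squares. \<forall>b\<in>sums_of_squares. a + x*b = 0 \<longrightarrow> a = 0 \<and> b = (0::real poly)"
    using onevar x_def by blast
  have pc2: "\<forall>a\<in>sums_of_squares. \<forall>b\<in>sums_of_squares. a + (-x)*b = 0 \<longrightarrow> a = 0 \<and> b = (0::real poly)"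
    using onevar x_def by blast
  note frp = FR_poly[OF FR_real]
  define E where "E = P1 + smult x P2"
  define F where "F = P3 + smult (-x) P0"
  note cE = comb[OF frp pc1 s1 s2, folded E_def]
  note cF = comb[OF frp pc2 s3 s0, folded F_def]
  have eq': "pCons 0 (smult x P0) = P1 + (pCons 0 P3 + smult x P2)"
    using eq unfolding x_def by (simp add: algebra_simps smult_add_right)
  have "E = pCons 0 (smult x P0) - pCons 0 P3" using eq' unfolding E_def by (simp add: algebra_simps)
  also have "\<dots> = pCons 0 (smult x P0 - P3)" by simp
  also have "\<dots> = - ([:0,1:] * F)" unfolding F_def by simp
  finally have EF: "E = - ([:0,1:] * F)" .
  have "F = 0"
  proof (rule ccontr)
    assume Fnz: "F \<noteq> 0"
    hence d: "degree ([:0,1:] * F) = Suc (degree F)" by simp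
    hence "E \<noteq> 0" "degree E = Suc (degree F)" using EF Fnz by auto
    then show False using cE cF Fnz by auto
  qed
  hence "E = 0" using EF by simp
  then show ?thesis using cE cF \<open>F = 0\<close> by auto
qed

lemma sos_mult_sq: "P \<in> sums_of_squares \<Longrightarrow> c^2 * P \<in> sums_of_squares"
proof -
  assume "P \<in> sums_of_squares"
  then obtain xs where "P = sum_list (map (\<lambda>a. a^2) xs)" unfolding sums_of_squares_def by auto
  then have "c^2 * P = sum_list (map (\<lambda>a. a^2) (map (\<lambda>a. c * a) xs))"
    by (induction xs arbitrary: P) (auto simp: algebra_simps power_mult_distrib)
  then show ?thesis unfolding sums_of_squares_def by blast
qed

lemma Fract1_add: "Fract (a::'a::idom) 1 + Fract b 1 = Fract (a + b) 1" by simp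
lemma Fract1_mult: "Fract (a::'a::idom) 1 * Fract b 1 = Fract (a * b) 1" by simp
lemma Fract1_eq: "Fract (a::'a::idom) 1 = Fract b 1 \<longleftrightarrow> a = b" by (simp add: eq_fract)
lemma Fract1_zero: "Fract (a::'a::idom) 1 = 0 \<longleftrightarrow> a = 0" by (simp add: eq_fract Zero_fract_def)

lemma frac_clear:
  assumes "(s :: 'a::idom fract) \<in> sums_of_squares"
  shows "\<exists>D P. D \<noteq> 0 \<and> P \<in> sums_of_squares \<and> Fract (D^2) 1 * s = Fract P 1"
proof -
  obtain xs where s: "s = sum_list (map (\<lambda>a. a^2) xs)"
    using assms unfolding sums_of_squares_def by auto
  show ?thesis unfolding s
  proof (induction xs)
    case Nil
    show ?case by (rule exI[of _ 1], rule exI[of _ 0]) (simp add: sos_zero Zero_fract_def)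
  next
    case (Cons f xs)
    then obtain D P where D: "D \<noteq> 0" and P: "P \<in> sums_of_squares"
      and DP: "Fract (D^2) 1 * sum_list (map (\<lambda>a. a^2) xs) = Fract P 1" by blast
    obtain a b where f: "f = Fract a b" and b: "b \<noteq> 0" by (cases f)
    have "Fract ((b*D)^2) 1 * sum_list (map (\<lambda>a. a^2) (f # xs))
        = Fract ((b*D)^2) 1 * f^2 + Fract (b^2) 1 * (Fract (D^2) 1 * sum_list (map (\<lambda>a. a^2) xs))"
      by (simp add: algebra_simps power_mult_distrib)
    also have "Fract ((b*D)^2) 1 * f^2 = Fract ((D*a)^2) 1"
      unfolding f using b by (simp add: power2_eq_square eq_fract algebra_simps)
    also have "Fract (b^2) 1 * (Fract (D^2) 1 * sum_list (map (\<lambda>a. a^2) xs)) = Fract (b^2 * P) 1"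
      using DP by simp
    finally have "Fract ((b*D)^2) 1 * sum_list (map (\<lambda>a. a^2) (f # xs)) = Fract ((D*a)^2 + b^2 * P) 1"
      by simp
    moreover have "b * D \<noteq> 0" using b D by simp
    moreover have "(D*a)^2 + b^2 * P \<in> sums_of_squares" using sos_add[OF sos_sq sos_mult_sq[OF P]] by simp
    ultimately show ?case by blast
  qed
qed

lemma frac_scale:
  assumes "Fract ((D::'a::idom)^2) 1 * s = Fract P 1" "P \<in> sums_of_squares"
  shows "Fract ((E*D)^2) 1 * s = Fract (E^2 * P) 1" "E^2 * P \<in> sums_of_squares"
proof -
  have "Fract ((E*D)^2) 1 * s = Fract (E^2) 1 * (Fract (D^2) 1 * s)"
    by (simp add: power_mult_distrib)
  then show "Fract ((E*D)^2) 1 * s = Fract (E^2 * P) 1" using assms by simp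
  show "E^2 * P \<in> sums_of_squares" using sos_mult_sq[OF assms(2)] .
qed

theorem mainTheorem5:
  fixes s0 s1 s2 s3 :: rat_fun2
  assumes "s0 \<in> sums_of_squares" and "s1 \<in> sums_of_squares"
    and "s2 \<in> sums_of_squares" and "s3 \<in> sums_of_squares"
    and "s0 * varX * varY = s1 + s2 * varX + s3 * varY"
  shows "s0 = 0 \<and> s1 = 0 \<and> s2 = 0 \<and> s3 = 0"
proof -
  obtain D0 P0 where D0: "D0 \<noteq> 0" "P0 \<in> sums_of_squares" "Fract (D0^2) 1 * s0 = Fract P0 1"
    using frac_clear[OF assms(1)] by blast
  obtain D1 P1 where D1: "D1 \<noteq> 0" "P1 \<in> sums_of_squares" "Fract (D1^2) 1 * s1 = Fract P1 1"
    using frac_clear[OF assms(2)] by blast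
  obtain D2 P2 where D2: "D2 \<noteq> 0" "P2 \<in> sums_of_squares" "Fract (D2^2) 1 * s2 = Fract P2 1"
    using frac_clear[OF assms(3)] by blast
  obtain D3 P3 where D3: "D3 \<noteq> 0" "P3 \<in> sums_of_squares" "Fract (D3^2) 1 * s3 = Fract P3 1"
    using frac_clear[OF assms(4)] by blast
  define D where "D = D0 * D1 * D2 * D3"
  have Dnz: "D \<noteq> 0" using D0 D1 D2 D3 by (simp add: D_def)
  define Q0 where "Q0 = (D1*D2*D3)^2 * P0"
  define Q1 where "Q1 = (D0*D2*D3)^2 * P1"
  define Q2 where "Q2 = (D0*D1*D3)^2 * P2"
  define Q3 where "Q3 = (D0*D1*D2)^2 * P3"
  have e0: "Fract (D^2) 1 * s0 = Fract Q0 1" "Q0 \<in> sums_of_squares"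
    using frac_scale[OF D0(3) D0(2), of "D1*D2*D3"] unfolding Q0_def D_def by (simp_all add: ac_simps)
  have e1: "Fract (D^2) 1 * s1 = Fract Q1 1" "Q1 \<in> sums_of_squares"
    using frac_scale[OF D1(3) D1(2), of "D0*D2*D3"] unfolding Q1_def D_def by (simp_all add: ac_simps)
  have e2: "Fract (D^2) 1 * s2 = Fract Q2 1" "Q2 \<in> sums_of_squares"
    using frac_scale[OF D2(3) D2(2), of "D0*D1*D3"] unfolding Q2_def D_def by (simp_all add: ac_simps)
  have e3: "Fract (D^2) 1 * s3 = Fract Q3 1" "Q3 \<in> sums_of_squares"
    using frac_scale[OF D3(3) D3(2), of "D0*D1*D2"] unfolding Q3_def D_def by (simp_all add: ac_simps)
  define K where "K = Fract (D^2) 1"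
  have Knz: "K \<noteq> 0" unfolding K_def using Dnz by (simp add: Fract1_zero)
  have "K * (s0 * varX * varY) = K * (s1 + s2 * varX + s3 * varY)" using assms(5) by simp
  hence "(K * s0) * varX * varY = K * s1 + (K * s2) * varX + (K * s3) * varY"
    by (simp add: algebra_simps)
  hence "Fract (Q0 * [:[:0,1:]:] * [:0,1:]) 1 = Fract (Q1 + Q2 * [:[:0,1:]:] + Q3 * [:0,1:]) 1"
    unfolding K_def e0 e1 e2 e3 varX_def varY_def by simp
  hence "Q0 * [:[:0,1:]:] * [:0,1:] = Q1 + Q2 * [:[:0,1:]:] + Q3 * [:0,1:]"
    by (simp only: Fract1_eq)
  from polymain[OF e0(2) e1(2) e2(2) e3(2) this]
  have "K * s0 = 0 \<and> K * s1 = 0 \<and> K * s2 = 0 \<and> K * s3 = 0"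
    unfolding K_def e0 e1 e2 e3 by (simp add: Zero_fract_def)
  then show ?thesis using Knz by simp
qed

end
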